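(* Let $a,b>0$ with $a\ne b$, and $\nu\in(0,1)$ with $\nu\ne\frac12$. Let $r=\min\{\nu,1-\nu\}$, $R=\max\{\nu,1-\nu\}$ and $$E_\nu(a,b):=\frac{1}{\log b-\log a}\left(\frac{a^{1-\nu}b^\nu-a}{\nu}+\frac{b-a^{1-\nu}b^\nu}{1-\nu}-\frac{4\big(\sqrt{ab}-a^{1-\nu}b^\nu\big)}{1-2\nu}\right).$$ Then $$r\,E_\nu(a,b)\le L_\nu(a,b)-a^{1-\nu}b^\nu\le R\,E_\nu(a,b).$$
   Context: For $a,b>0$, $a\neq b$ and $\nu\in(0,1)$, the weighted logarithmic mean is $$L_\nu(a,b):=\frac{1}{\log a-\log b}\left\{\frac{1-\nu}{\nu}\big(a-a^{1-\nu}b^\nu\big)+\frac{\nu}{1-\nu}\big(a^{1-\nu}b^\nu-b\big)\right\}.$$ *)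

theory Defs
  imports Complex_Main
begin

definition weighted_log_mean :: "real \<Rightarrow> real \<Rightarrow> real \<Rightarrow> real" where
  "weighted_log_mean \<nu> a b =
     (1 / (ln a - ln b)) *
     ((1 - \<nu>) / \<nu> * (a - a powr (1 - \<nu>) * b powr \<nu>)
      + \<nu> / (1 - \<nu>) * (a powr (1 - \<nu>) * b powr \<nu> - b))"

definition E_nu :: "real \<Rightarrow> real \<Rightarrow> real \<Rightarrow> real" where
  "E_nu \<nu> a b =
     (1 / (ln b - ln a)) *
     ((a powr (1 - \<nu>) * b powr \<nu> - a) / \<nu>
      + (b - a powr (1 - \<nu>) * b powr \<nu>) / (1 - \<nu>)
      - 4 * (sqrt (a * b) - a powr (1 - \<nu>) * b powr \<nu>) / (1 - 2 * \<nu>))"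

end

theory Submission
  imports Defs
begin

definition mm :: "real \<Rightarrow> real" where "mm z = exp z * (z - 2) + z + 2"
definition kk :: "real \<Rightarrow> real" where "kk z = (exp z - 1 - z) / z^2"

lemma mm_mono: assumes "u \<le> v" shows "mm u \<le> mm v"
proof (rule DERIV_nonneg_imp_nondecreasing[OF assms])
  fix x assume "u \<le> x" "x \<le> v"
  have d: "(mm has_real_derivative (exp x * (x - 1) + 1)) (at x)"
    unfolding mm_def[abs_def] by (auto intro!: derivative_eq_intros simp: algebra_simps)
  have "exp (-x) \<ge> 1 - x" using exp_ge_add_one_self[of "-x"] by simp
  hence "exp x * (exp (-x)) \<ge> exp x * (1 - x)" by (simp add: mult_left_mono)
  hence "exp x * (x - 1) + 1 \<ge> 0" by (simp add: exp_minus field_simps)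
  with d show "\<exists>y. (mm has_real_derivative y) (at x) \<and> 0 \<le> y" by blast
qed

lemma mm0: "mm 0 = 0" by (simp add: mm_def)

lemma kk_deriv: assumes "z \<noteq> 0" shows "(kk has_real_derivative (mm z / z^3)) (at z)"
proof -
  have "(kk has_real_derivative (((exp z - 1) * z^2 - (exp z - 1 - z) * (2 * z)) / (z^2)^2)) (at z)"
    unfolding kk_def[abs_def] using assms
    by (auto intro!: derivative_eq_intros simp: power2_eq_square)
  moreover have "((exp z - 1) * z^2 - (exp z - 1 - z) * (2 * z)) / (z^2)^2 = mm z / z^3"
    using assms by (simp add: mm_def field_simps power2_eq_square power3_eq_cube)
  ultimately show ?thesis by simp
qed

lemma kk_mono_pos: assumes "0 < u" "u \<le> v" shows "kk u \<le> kk v"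
proof (rule DERIV_nonneg_imp_nondecreasing[OF assms(2)])
  fix x assume "u \<le> x" "x \<le> v"
  hence x: "x > 0" using assms by simp
  have "mm x \<ge> 0" using mm_mono[of 0 x] x mm0 by simp
  hence "mm x / x^3 \<ge> 0" using x by simp
  with kk_deriv[of x] x show "\<exists>y. (kk has_real_derivative y) (at x) \<and> 0 \<le> y" by auto
qed

lemma kk_mono_neg: assumes "v < 0" "u \<le> v" shows "kk u \<le> kk v"
proof (rule DERIV_nonneg_imp_nondecreasing[OF assms(2)])
  fix x assume "u \<le> x" "x \<le> v"
  hence x: "x < 0" using assms by simp
  have "mm x \<le> 0" using mm_mono[of x 0] x mm0 by simp
  moreover have "x^3 < 0" using x by (simp add: power_less_zero_eq)
  ultimately have "mm x / x^3 \<ge> 0" by (simp add: divide_nonpos_neg)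
  with kk_deriv[of x] x show "\<exists>y. (kk has_real_derivative y) (at x) \<and> 0 \<le> y" by auto
qed

definition nn :: "real \<Rightarrow> real" where "nn z = exp z - 1 - z - z^2/2"

lemma nn_mono: assumes "u \<le> v" shows "nn u \<le> nn v"
proof (rule DERIV_nonneg_imp_nondecreasing[OF assms])
  fix x assume "u \<le> x" "x \<le> v"
  have d: "(nn has_real_derivative (exp x - 1 - x)) (at x)"
    unfolding nn_def[abs_def] by (auto intro!: derivative_eq_intros simp: algebra_simps)
  have "exp x - 1 - x \<ge> 0" using exp_ge_add_one_self[of x] by linarith
  with d show "\<exists>y. (nn has_real_derivative y) (at x) \<and> 0 \<le> y" by blast
qed

lemma kk_pos: assumes "z > 0" shows "kk z \<ge> 1/2"
proof -
  have "nn z \<ge> 0" using nn_mono[of 0 z] assms by (simp add: nn_def)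
  thus ?thesis using assms by (simp add: kk_def nn_def field_simps)
qed

lemma kk_neg: assumes "z < 0" shows "kk z \<le> 1/2"
proof -
  have "nn z \<le> 0" using nn_mono[of z 0] assms by (simp add: nn_def)
  thus ?thesis using assms by (simp add: kk_def nn_def field_simps)
qed

lemma kk_mono: assumes "u \<noteq> 0" "v \<noteq> 0" "u \<le> v" shows "kk u \<le> kk v"
proof (cases "u > 0")
  case True thus ?thesis using kk_mono_pos assms by auto
next
  case False
  show ?thesis proof (cases "v < 0")
    case True thus ?thesis using kk_mono_neg assms by auto
  next
    case False
    thus ?thesis using \<open>\<not> u > 0\<close> assms kk_pos[of v] kk_neg[of u] by auto
  qed
qed

definition psi :: "real \<Rightarrow> real \<Rightarrow> real" where "psi x u = (exp (x*u) - 1 - x*u) / (x * u^2)"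

lemma psi_mono: assumes "x \<noteq> 0" "u \<noteq> 0" "v \<noteq> 0" "u \<le> v" shows "psi x u \<le> psi x v"
proof -
  have e: "psi x w = x * kk (x*w)" if "w \<noteq> 0" for w
    using that assms by (simp add: psi_def kk_def field_simps power2_eq_square)
  show ?thesis
  proof (cases "x > 0")
    case True
    hence "kk (x*u) \<le> kk (x*v)" using assms by (intro kk_mono) (auto intro: mult_left_mono)
    thus ?thesis using e assms True by (simp add: mult_left_mono)
  next
    case False
    hence x: "x < 0" using assms by simp
    hence "kk (x*v) \<le> kk (x*u)" using assms by (intro kk_mono) (auto intro: mult_left_mono_neg)
    thus ?thesis using e assms x by (simp add: mult_left_mono_neg)
  qed
qed

lemma alg1:
  fixes G P Q S x v d e c :: real
  assumes "x \<noteq> 0" "v \<noteq> 0" "d \<noteq> 0" "e \<noteq> 0" "c \<noteq> 0"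
   and hd: "d = 1 - v" and he: "e = 1 - 2*v" and hc: "c = 1/2 - v"
  shows "d*((1/x)*((G - G*P)/v + (G*Q - G)/d - 4*(G*S - G)/e))
     - ((1/(-x))*(d/v*(G*P - G) + v/d*(G - G*Q)) - G)
   = G*d*e*((Q - 1 - x*d)/(x*d^2) - (S - 1 - x*c)/(x*c^2))"
  using assms(1-5) apply (simp add: field_simps power2_eq_square)
  apply (simp only: hd he hc)
  apply algebra
  done
lemma alg2:
  fixes G P Q S x v d e c :: real
  assumes "x \<noteq> 0" "v \<noteq> 0" "d \<noteq> 0" "e \<noteq> 0" "c \<noteq> 0"
   and hd: "d = 1 - v" and he: "e = 1 - 2*v" and hc: "c = 1/2 - v"
  shows "((1/(-x))*(d/v*(G*P - G) + v/d*(G - G*Q)) - G)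
     - v*((1/x)*((G - G*P)/v + (G*Q - G)/d - 4*(G*S - G)/e))
   = G*v*e*((S - 1 - x*c)/(x*c^2) - (P - 1 - x*(-v))/(x*(-v)^2))"
  using assms(1-5) apply (simp add: field_simps power2_eq_square)
  apply (simp only: hd he hc)
  apply algebra
  done
theorem corollary2p13:
  fixes a b \<nu> :: real
  assumes "a > 0" and "b > 0" and "a \<noteq> b"
    and "0 < \<nu>" and "\<nu> < 1" and "\<nu> \<noteq> 1 / 2"
  shows "min \<nu> (1 - \<nu>) * E_nu \<nu> a b \<le> weighted_log_mean \<nu> a b - a powr (1 - \<nu>) * b powr \<nu>
       \<and> weighted_log_mean \<nu> a b - a powr (1 - \<nu>) * b powr \<nu> \<le> max \<nu> (1 - \<nu>) * E_nu \<nu> a b"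
proof -
  define x where "x = ln b - ln a"
  define G where "G = a powr (1 - \<nu>) * b powr \<nu>"
  define d where "d = 1 - \<nu>"
  define e where "e = 1 - 2*\<nu>"
  define c where "c = 1/2 - \<nu>"
  have x0: "x \<noteq> 0" using assms by (simp add: x_def)
  have d0: "d \<noteq> 0" "d > 0" using assms by (auto simp: d_def)
  have e0: "e \<noteq> 0" using assms by (auto simp: e_def)
  have c0: "c \<noteq> 0" using assms by (auto simp: c_def)
  have v0: "\<nu> \<noteq> 0" using assms by simp
  have Gexp: "G = exp (ln a + x*\<nu>)"
    using assms by (simp add: G_def powr_def x_def exp_add[symmetric] algebra_simps)
  have Gpos: "G > 0" using Gexp by simp
  have hP: "G * exp (x*(-\<nu>)) = a" using assms by (simp add: Gexp exp_add[symmetric])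
  have hQ: "G * exp (x*d) = b" using assms by (simp add: Gexp exp_add[symmetric] d_def x_def algebra_simps)
  have hS: "G * exp (x*c) = sqrt (a*b)"
  proof -
    have "sqrt (a*b) = (a*b) powr (1/2)" using assms by (simp add: powr_half_sqrt)
    also have "... = exp ((ln a + ln b)/2)" using assms by (simp add: powr_def ln_mult)
    also have "... = G * exp (x*c)" by (simp add: Gexp exp_add[symmetric] x_def c_def algebra_simps field_simps)
    finally show ?thesis by simp
  qed
  have L: "weighted_log_mean \<nu> a b = (1/(-x))*(d/\<nu>*(G*exp (x*(-\<nu>)) - G) + \<nu>/d*(G - G*exp (x*d)))"
    unfolding weighted_log_mean_def hP hQ by (simp add: x_def d_def G_def)
  have E: "E_nu \<nu> a b = (1/x)*((G - G*exp (x*(-\<nu>)))/\<nu> + (G*exp (x*d) - G)/d - 4*(G*exp (x*c) - G)/e)"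
    unfolding E_nu_def hP hQ hS by (simp add: x_def d_def e_def G_def)
  have D1: "d * E_nu \<nu> a b - (weighted_log_mean \<nu> a b - G) = G*d*e*(psi x d - psi x c)"
    unfolding L E psi_def by (rule alg1[OF x0 v0 d0(1) e0 c0 d_def e_def c_def])
  have D2: "(weighted_log_mean \<nu> a b - G) - \<nu> * E_nu \<nu> a b = G*\<nu>*e*(psi x c - psi x (-\<nu>))"
    unfolding L E psi_def by (rule alg2[OF x0 v0 d0(1) e0 c0 d_def e_def c_def])
  have p1: "psi x c \<le> psi x d" using x0 c0 d0 by (intro psi_mono) (auto simp: c_def d_def)
  have p2: "psi x (-\<nu>) \<le> psi x c" using x0 c0 v0 assms by (intro psi_mono) (auto simp: c_def)
  have GG: "a powr (1 - \<nu>) * b powr \<nu> = G" by (simp add: G_def)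
  show ?thesis
  proof (cases "\<nu> < 1/2")
    case True
    have m: "min \<nu> (1 - \<nu>) = \<nu>" "max \<nu> (1 - \<nu>) = d" using True by (auto simp: d_def)
    have "e > 0" using True by (simp add: e_def)
    hence "G*d*e*(psi x d - psi x c) \<ge> 0" "G*\<nu>*e*(psi x c - psi x (-\<nu>)) \<ge> 0"
      using p1 p2 Gpos d0 assms by (auto intro!: mult_nonneg_nonneg)
    thus ?thesis unfolding m GG using D1 D2 by linarith
  next
    case False
    have m: "min \<nu> (1 - \<nu>) = d" "max \<nu> (1 - \<nu>) = \<nu>" using False by (auto simp: d_def)
    have "e < 0" using False assms by (simp add: e_def)
    have q1: "G*d*(psi x d - psi x c) \<ge> 0" "G*\<nu>*(psi x c - psi x (-\<nu>)) \<ge> 0"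
      using p1 p2 Gpos d0 assms by auto
    have "(G*d*(psi x d - psi x c))*e \<le> 0" "(G*\<nu>*(psi x c - psi x (-\<nu>)))*e \<le> 0"
      using q1 \<open>e < 0\<close> by (auto intro!: mult_nonneg_nonpos)
    hence "G*d*e*(psi x d - psi x c) \<le> 0" "G*\<nu>*e*(psi x c - psi x (-\<nu>)) \<le> 0"
      by (simp_all add: algebra_simps)
    thus ?thesis unfolding m GG using D1 D2 by linarith
  qed
qed

end
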